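(* Let $n\ge 1$ and let $p,q,r$ be nonzero real numbers. If the map $(A,B,C)\mapsto \mathrm{Tr}[A^{q/2}B^pA^{q/2}C^r]$ is jointly convex (respectively jointly concave) on $\mathcal{P}_n\times\mathcal{P}_n\times\mathcal{P}_n$, then the matrix-valued map $(A,B)\mapsto A^{q/2}B^pA^{q/2}$ is jointly operator convex (respectively jointly operator concave) on $\mathcal{P}_n\times\mathcal{P}_n$.
   Context: $\mathcal{P}_n$ denotes the set of $n\times n$ positive definite complex matrices. A map $F:\mathcal{P}_n\times\mathcal{P}_n\to M_n(\mathbb{C})_{\mathrm{sa}}$ is jointly operator convex if $F(\lambda A_1+(1-\lambda)A_2,\lambda B_1+(1-\lambda)B_2)\le \lambda F(A_1,B_1)+(1-\lambda)F(A_2,B_2)$ in the positive semidefinite (Loewner) order for all $A_i,B_i\in\mathcal{P}_n$, $\lambda\in[0,1]$; operator concave is defined with the reversed inequality. *)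

theory Defs
  imports "HOL-Analysis.Analysis"
begin

text \<open>Complex n x n matrices are represented as complex^'n^'n, the dimension n = CARD('n) \<ge> 1.\<close>

definition cadj :: "complex^'n^'n \<Rightarrow> complex^'n^'n" where
  "cadj A = (\<chi> i j. cnj (A $ j $ i))"

definition hermitian :: "complex^'n^'n \<Rightarrow> bool" where
  "hermitian A \<longleftrightarrow> cadj A = A"

definition qform :: "complex^'n^'n \<Rightarrow> complex^'n \<Rightarrow> complex" where
  "qform A x = (\<Sum>i\<in>UNIV. \<Sum>j\<in>UNIV. cnj (x $ i) * A $ i $ j * x $ j)"

definition posdef :: "complex^'n^'n \<Rightarrow> bool" where
  "posdef A \<longleftrightarrow> hermitian A \<and> (\<forall>x. x \<noteq> 0 \<longrightarrow> Re (qform A x) > 0)"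

definition possemidef :: "complex^'n^'n \<Rightarrow> bool" where
  "possemidef A \<longleftrightarrow> hermitian A \<and> (\<forall>x. Re (qform A x) \<ge> 0)"

definition loewner_le :: "complex^'n^'n \<Rightarrow> complex^'n^'n \<Rightarrow> bool" where
  "loewner_le X Y \<longleftrightarrow> possemidef (Y - X)"

definition unitary :: "complex^'n^'n \<Rightarrow> bool" where
  "unitary U \<longleftrightarrow> cadj U ** U = mat 1"

definition rdiag :: "('n \<Rightarrow> real) \<Rightarrow> complex^'n^'n" where
  "rdiag d = (\<chi> i j. if i = j then complex_of_real (d i) else 0)"

definition mpow :: "complex^'n^'n \<Rightarrow> real \<Rightarrow> complex^'n^'n" where
  "mpow A s = (SOME X. \<exists>U d. unitary U \<and> A = U ** rdiag d ** cadj U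
                         \<and> X = U ** rdiag (\<lambda>i. d i powr s) ** cadj U)"

end

theory Submission
  imports Defs
begin


definition ip :: "complex^'n \<Rightarrow> complex^'n \<Rightarrow> complex" where
  "ip x y = (\<Sum>i\<in>UNIV. cnj (x $ i) * y $ i)"

lemma ip_add_left: "ip (x + y) z = ip x z + ip y z"
  by (simp add: ip_def distrib_right sum.distrib)
lemma ip_add_right: "ip z (x + y) = ip z x + ip z y"
  by (simp add: ip_def distrib_left sum.distrib)
lemma ip_diff_left: "ip (x - y) z = ip x z - ip y z"
  by (simp add: ip_def left_diff_distrib sum_subtractf)
lemma ip_diff_right: "ip z (x - y) = ip z x - ip z y"
  by (simp add: ip_def right_diff_distrib sum_subtractf)
lemma ip_smult_left: "ip (c *s x) z = cnj c * ip x z"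
  by (simp add: ip_def sum_distrib_left mult.assoc)
lemma ip_smult_right: "ip z (c *s x) = c * ip z x"
  by (simp add: ip_def sum_distrib_left mult.left_commute)
lemma scaleR_smult: "t *\<^sub>R (x::complex^'n) = (of_real t) *s x"
  unfolding vec_eq_iff vector_scaleR_component vector_smult_component by (simp add: scaleR_conv_of_real)
lemma ip_scaleR_left: "ip (t *\<^sub>R x) z = of_real t * ip x z"
  by (simp add: scaleR_smult ip_smult_left)
lemma ip_scaleR_right: "ip z (t *\<^sub>R x) = of_real t * ip z x"
  by (simp add: scaleR_smult ip_smult_right)
lemma ip_zero_left[simp]: "ip 0 z = 0" by (simp add: ip_def)
lemma ip_zero_right[simp]: "ip z 0 = 0" by (simp add: ip_def)
lemma ip_sum_right: "finite S \<Longrightarrow> ip z (\<Sum>j\<in>S. f j) = (\<Sum>j\<in>S. ip z (f j))"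
  by (induction S rule: finite_induct) (auto simp: ip_add_right)
lemma ip_cnj: "cnj (ip x y) = ip y x"
  by (simp add: ip_def mult.commute)

lemma ip_self: "ip x x = of_real ((norm x)^2)"
proof -
  have "ip x x = (\<Sum>i\<in>UNIV. of_real ((cmod (x$i))^2))"
    unfolding ip_def by (intro sum.cong refl) (simp only: complex_norm_square mult.commute)
  also have "\<dots> = of_real (\<Sum>i\<in>UNIV. (cmod (x$i))^2)" by simp
  also have "(\<Sum>i\<in>UNIV. (cmod (x$i))^2) = (norm x)^2"
    unfolding norm_vec_def L2_set_def by (simp add: sum_nonneg)
  finally show ?thesis .
qed

lemma ip_self_eq0: "ip x x = 0 \<longleftrightarrow> x = 0"
  by (simp add: ip_self)

lemma hermitian_ip:
  assumes "hermitian A" shows "ip x (A *v y) = ip (A *v x) y"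
proof -
  have h: "\<And>i j. cnj (A $ j $ i) = A $ i $ j"
    using assms unfolding hermitian_def cadj_def by (metis vec_lambda_beta)
  have "ip x (A *v y) = (\<Sum>i\<in>UNIV. \<Sum>j\<in>UNIV. cnj (x $ i) * A $ i $ j * y $ j)"
    by (simp add: ip_def matrix_vector_mult_def sum_distrib_left mult.assoc)
  also have "\<dots> = (\<Sum>j\<in>UNIV. \<Sum>i\<in>UNIV. cnj (x $ i) * A $ i $ j * y $ j)"
    by (rule sum.swap)
  also have "\<dots> = (\<Sum>j\<in>UNIV. (\<Sum>i\<in>UNIV. cnj (A $ j $ i * x $ i)) * y $ j)"
    by (simp only: sum_distrib_right sum_distrib_left complex_cnj_mult h mult_ac)
  also have "\<dots> = ip (A *v x) y"
    by (simp add: ip_def matrix_vector_mult_def)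
  finally show ?thesis .
qed

lemma mv_smult: "(A::complex^'n^'n) *v (c *s x) = c *s (A *v x)"
  by (simp add: vec_eq_iff matrix_vector_mult_def sum_distrib_left mult.left_commute)

lemma mv_scaleR: "(A::complex^'n^'n) *v (t *\<^sub>R x) = t *\<^sub>R (A *v x)"
  by (simp add: scaleR_smult mv_smult)


lemma ip_cont: "continuous_on UNIV (\<lambda>z. ip u z)"
  unfolding ip_def by (intro continuous_intros)

lemma Q_cont: "continuous_on S (\<lambda>z. Re (ip z ((A::complex^'n^'n) *v z)))"
  unfolding ip_def matrix_vector_mult_def by (intro continuous_intros)

lemma Q_expand:
  assumes "hermitian (A::complex^'n^'n)"
  shows "Re (ip (x + t *\<^sub>R y) (A *v (x + t *\<^sub>R y))) =
     Re (ip x (A *v x)) + 2 * t * Re (ip y (A *v x)) + t^2 * Re (ip y (A *v y))"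
proof -
  have h0: "ip x (A *v y) = cnj (ip y (A *v x))" by (simp add: hermitian_ip[OF assms] ip_cnj)
  have h: "Re (ip x (A *v y)) = Re (ip y (A *v x))" unfolding h0 by simp
  have e: "ip (x + t *\<^sub>R y) (A *v (x + t *\<^sub>R y)) = ip x (A *v x) + of_real t * ip x (A *v y)
     + of_real t * ip y (A *v x) + of_real t * (of_real t * ip y (A *v y))"
    by (simp only: matrix_vector_right_distrib mv_scaleR ip_add_left ip_add_right ip_scaleR_left
        ip_scaleR_right distrib_left add.assoc) (simp only: add_ac)
  show ?thesis unfolding e by (simp add: h power2_eq_square)
qed

lemma N_expand:
  "(norm (x + t *\<^sub>R y))^2 = (norm x)^2 + 2 * t * Re (ip y x) + t^2 * (norm y)^2"
proof -
  have h0: "ip x y = cnj (ip y x)" by (simp add: ip_cnj)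
  have h: "Re (ip x y) = Re (ip y x)" unfolding h0 by simp
  have e: "ip (x + t *\<^sub>R y) (x + t *\<^sub>R y) = ip x x + of_real t * ip x y
     + of_real t * ip y x + of_real t * (of_real t * ip y y)"
    by (simp only: ip_add_left ip_add_right ip_scaleR_left ip_scaleR_right distrib_left add.assoc) (simp only: add_ac)
  have "(norm (x + t *\<^sub>R y))^2 = Re (ip (x + t *\<^sub>R y) (x + t *\<^sub>R y))"
    by (simp add: ip_self)
  also have "\<dots> = Re (ip x x) + 2 * t * Re (ip y x) + t^2 * Re (ip y y)"
    unfolding e by (simp add: h power2_eq_square)
  finally show ?thesis by (simp add: ip_self)
qed

lemma Q_scale:
  "Re (ip (c *\<^sub>R z) ((A::complex^'n^'n) *v (c *\<^sub>R z))) = c^2 * Re (ip z (A *v z))"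
  by (simp add: mv_scaleR ip_scaleR_left ip_scaleR_right power2_eq_square)

lemma quad_nonpos:
  fixes a k :: real
  assumes "\<And>t. 2 * t * a + t^2 * k \<le> 0" and "a \<ge> 0"
  shows "a = 0"
proof (rule ccontr)
  assume "a \<noteq> 0" hence a: "a > 0" using assms by simp
  define t where "t = a / (\<bar>k\<bar> + 1)"
  have t: "t > 0" using a by (simp add: t_def)
  have "2 * t * a + t^2 * k \<le> 0" by (rule assms)
  hence "t * (2 * a + t * k) \<le> 0" by (simp add: algebra_simps power2_eq_square)
  hence "2 * a + t * k \<le> 0" using t by (simp add: mult_le_0_iff)
  moreover have "t * \<bar>k\<bar> < a"
  proof -
    have "t * \<bar>k\<bar> = a * (\<bar>k\<bar> / (\<bar>k\<bar> + 1))" by (simp add: t_def)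
    also have "\<dots> < a * 1" using a by (intro mult_strict_left_mono) auto
    finally show ?thesis by simp
  qed
  moreover have "- (t * \<bar>k\<bar>) \<le> t * k"
  proof -
    have "t * (- k) \<le> t * \<bar>k\<bar>" using t by (intro mult_left_mono) auto
    thus ?thesis by simp
  qed
  ultimately show False using a by linarith
qed


lemma Re_ofreal_mult: "Re (of_real l * z) = l * Re z" by simp


lemma eigen_step:
  fixes A :: "complex^'n^'n" and I :: "'n set"
  assumes herm: "hermitian A" and fin: "finite I" and kI: "k \<notin> I"
    and orth: "\<forall>i\<in>I. \<forall>j\<in>I. ip (v i) (v j) = (if i = j then 1 else 0)"
    and eig: "\<forall>i\<in>I. A *v v i = of_real (lam i) *s v i"
  shows "\<exists>x l. ip x x = 1 \<and> (\<forall>j\<in>I. ip (v j) x = 0) \<and> A *v x = of_real l *s x"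
proof -
  define W where "W = {z. \<forall>j\<in>I. ip (v j) z = 0}"
  have W_add: "a + b \<in> W" if "a \<in> W" "b \<in> W" for a b
    using that by (simp add: W_def ip_add_right)
  have W_scale: "c *\<^sub>R a \<in> W" if "a \<in> W" for a c
    using that by (simp add: W_def ip_scaleR_right)
  obtain w where w0: "w \<noteq> 0" and wW: "w \<in> W"
  proof -
    have "card I < card (UNIV::'n set)"
      using kI by (intro psubset_card_mono) auto
    moreover have "card (v ` I) \<le> card I" using fin by (rule card_image_le)
    moreover have "vec.dim (v ` I) \<le> card (v ` I)" using fin by (intro vec.dim_le_card') simp
    ultimately have "vec.dim (v ` I) < CARD('n)" by simp
    hence "vec.span (v ` I) \<noteq> UNIV" using vec_dim_card[where 'a=complex and 'n='n]
      by (metis order.irrefl vec.dim_span)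
    then obtain z where z: "z \<notin> vec.span (v ` I)" by blast
    define w where "w = z - (\<Sum>j\<in>I. ip (v j) z *s v j)"
    have "w \<noteq> 0"
    proof
      assume "w = 0"
      hence "z = (\<Sum>j\<in>I. ip (v j) z *s v j)" by (simp add: w_def)
      moreover have "(\<Sum>j\<in>I. ip (v j) z *s v j) \<in> vec.span (v ` I)"
        by (intro vec.span_sum vec.span_scale vec.span_base) auto
      ultimately show False using z by simp
    qed
    moreover have "w \<in> W"
      unfolding W_def
    proof (intro CollectI ballI)
      fix k' assume k': "k' \<in> I"
      have "ip (v k') (\<Sum>j\<in>I. ip (v j) z *s v j) = (\<Sum>j\<in>I. ip (v j) z * ip (v k') (v j))"
        using fin by (simp add: ip_sum_right ip_smult_right)
      also have "\<dots> = (\<Sum>j\<in>I. if j = k' then ip (v k') z else 0)"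
        using k' orth by (intro sum.cong refl) auto
      also have "\<dots> = ip (v k') z" using fin k' by simp
      finally show "ip (v k') w = 0" by (simp add: w_def ip_diff_right)
    qed
    ultimately show ?thesis using that by blast
  qed
  define S where "S = sphere (0::complex^'n) 1 \<inter> W"
  have "closed W"
  proof -
    have "W = (\<Inter>j\<in>I. {z. ip (v j) z = (\<lambda>_. 0) z})" by (auto simp: W_def)
    thus ?thesis by (auto intro!: closed_INT closed_Collect_eq ip_cont continuous_on_const)
  qed
  hence cS: "compact S" unfolding S_def by (intro compact_Int_closed) auto
  have "(1 / norm w) *\<^sub>R w \<in> S" using w0 wW W_scale by (auto simp: S_def)
  hence neS: "S \<noteq> {}" by blast
  define Q where "Q z = Re (ip z (A *v z))" for z
  obtain x where xS: "x \<in> S" and xmax: "\<forall>y\<in>S. Q y \<le> Q x"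
    using continuous_attains_sup[OF cS neS Q_cont[of S A]] unfolding Q_def by blast
  define l where "l = Q x"
  have nx: "norm x = 1" and xW: "x \<in> W" using xS by (auto simp: S_def)
  have bound: "Q z \<le> l * (norm z)^2" if "z \<in> W" for z
  proof (cases "z = 0")
    case True thus ?thesis by (simp add: Q_def)
  next
    case False
    have "(1 / norm z) *\<^sub>R z \<in> S" using False that W_scale by (auto simp: S_def)
    hence "Q ((1 / norm z) *\<^sub>R z) \<le> l" using xmax by (simp add: l_def)
    hence "(1 / norm z)^2 * Q z \<le> l" by (simp add: Q_def Q_scale)
    thus ?thesis using False by (simp add: field_simps power2_eq_square)
  qed
  define y where "y = A *v x - l *\<^sub>R x"
  have yW: "y \<in> W" unfolding W_def y_def
  proof (intro CollectI ballI)
    fix j assume j: "j \<in> I"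
    have "ip (v j) (A *v x) = ip (A *v v j) x" by (rule hermitian_ip[OF herm])
    also have "\<dots> = 0" using eig j xW by (simp add: ip_smult_left W_def)
    finally show "ip (v j) (A *v x - l *\<^sub>R x) = 0"
      using j xW by (simp add: ip_diff_right ip_scaleR_right W_def)
  qed
  have key: "2 * t * (norm y)^2 + t^2 * (Q y - l * (norm y)^2) \<le> 0" for t
  proof -
    have "Q (x + t *\<^sub>R y) \<le> l * (norm (x + t *\<^sub>R y))^2"
      using bound W_add W_scale xW yW by blast
    hence "Q x + 2 * t * Re (ip y (A *v x)) + t^2 * Q y \<le>
           l * (1 + 2 * t * Re (ip y x) + t^2 * (norm y)^2)"
      unfolding Q_def Q_expand[OF herm] N_expand nx by simp
    moreover have "Re (ip y (A *v x)) = (norm y)^2 + l * Re (ip y x)"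
    proof -
      have "ip y y = ip y (A *v x) - of_real l * ip y x"
        by (simp add: y_def ip_diff_right ip_scaleR_right)
      hence "Re (ip y y) = Re (ip y (A *v x) - of_real l * ip y x)" by (rule arg_cong)
      thus ?thesis by (simp only: ip_self Re_complex_of_real minus_complex.sel Re_ofreal_mult)
    qed
    ultimately show ?thesis by (simp add: l_def algebra_simps)
  qed
  have "(norm y)^2 = 0" by (rule quad_nonpos[OF key]) simp
  hence "y = 0" by simp
  hence "A *v x = of_real l *s x" by (simp add: y_def scaleR_smult)
  moreover have "ip x x = 1" using nx by (simp add: ip_self)
  moreover have "\<forall>j\<in>I. ip (v j) x = 0" using xW by (simp add: W_def)
  ultimately show ?thesis by blast
qed

lemma eigen_basis:
  fixes A :: "complex^'n^'n" and I :: "'n set"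
  assumes herm: "hermitian A" and fin: "finite I"
  shows "\<exists>v lam. (\<forall>i\<in>I. \<forall>j\<in>I. ip (v i) (v j) = (if i = j then 1 else 0))
            \<and> (\<forall>i\<in>I. A *v v i = of_real (lam i) *s v i)"
  using fin
proof (induction I rule: finite_induct)
  case empty thus ?case by auto
next
  case (insert k I)
  then obtain v lam where orth: "\<forall>i\<in>I. \<forall>j\<in>I. ip (v i) (v j) = (if i = j then 1 else 0)"
    and eig: "\<forall>i\<in>I. A *v v i = of_real (lam i) *s v i" by blast
  obtain x l where x1: "ip x x = 1" and xo: "\<forall>j\<in>I. ip (v j) x = 0" and xe: "A *v x = of_real l *s x"
    using eigen_step[OF herm insert(1) insert(2) orth eig] by blast
  have xo': "\<forall>j\<in>I. ip x (v j) = 0" using xo by (metis ip_cnj complex_cnj_zero)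
  define v' where "v' = v(k := x)"
  define lam' where "lam' = lam(k := l)"
  have "\<forall>i\<in>insert k I. \<forall>j\<in>insert k I. ip (v' i) (v' j) = (if i = j then 1 else 0)"
    using orth xo xo' x1 insert(2) by (auto simp: v'_def)
  moreover have "\<forall>i\<in>insert k I. A *v v' i = of_real (lam' i) *s v' i"
    using eig xe insert(2) by (auto simp: v'_def lam'_def)
  ultimately show ?case by blast
qed

lemma spectral:
  fixes A :: "complex^'n^'n"
  assumes herm: "hermitian A"
  shows "\<exists>U d. unitary U \<and> A = U ** rdiag d ** cadj U"
proof -
  obtain v :: "'n \<Rightarrow> complex^'n" and lam :: "'n \<Rightarrow> real" where orth: "\<forall>i j. ip (v i) (v j) = (if i = j then 1 else 0)"
    and eig: "\<forall>i. A *v v i = of_real (lam i) *s v i"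
    using eigen_basis[OF herm, of UNIV] by auto
  define U :: "complex^'n^'n" where "U = (\<chi> i j. v j $ i)"
  have uU: "cadj U ** U = mat 1"
  proof -
    have "(cadj U ** U) $ i $ j = ip (v i) (v j)" for i j
      by (simp add: U_def cadj_def matrix_matrix_mult_def ip_def)
    thus ?thesis using orth by (simp add: vec_eq_iff mat_def)
  qed
  hence Uu: "U ** cadj U = mat 1" using matrix_left_right_inverse by blast
  have AU: "A ** U = U ** rdiag lam"
  proof -
    have "(A ** U) $ i $ j = (A *v v j) $ i" for i j
      by (simp add: U_def matrix_matrix_mult_def matrix_vector_mult_def)
    moreover have "(U ** rdiag lam) $ i $ j = of_real (lam j) * v j $ i" for i j
    proof -
      have "(U ** rdiag lam) $ i $ j = (\<Sum>k\<in>UNIV. if k = j then v j $ i * of_real (lam j) else 0)"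
        by (simp add: U_def rdiag_def matrix_matrix_mult_def if_distrib cong: if_cong)
      thus ?thesis by simp
    qed
    ultimately show ?thesis using eig by (simp add: vec_eq_iff)
  qed
  have "A = A ** (U ** cadj U)" by (simp add: Uu)
  also have "\<dots> = (A ** U) ** cadj U" by (rule matrix_mul_assoc)
  also have "\<dots> = U ** rdiag lam ** cadj U" by (simp only: AU)
  finally have "A = U ** rdiag lam ** cadj U" .
  moreover have "unitary U" using uU by (simp add: unitary_def)
  ultimately show ?thesis by blast
qed



lemma mm_add_r: "((A::complex^'n^'n) + B) ** C = A ** C + B ** C"
  by (simp add: vec_eq_iff matrix_matrix_mult_def distrib_right sum.distrib)
lemma mm_diff_r: "((A::complex^'n^'n) - B) ** C = A ** C - B ** C"
  by (simp add: vec_eq_iff matrix_matrix_mult_def left_diff_distrib sum_subtractf)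
lemma mm_diff_l: "(C::complex^'n^'n) ** (A - B) = C ** A - C ** B"
  by (simp add: vec_eq_iff matrix_matrix_mult_def right_diff_distrib sum_subtractf)
lemma mm_scaleR_l: "(c *\<^sub>R (A::complex^'n^'n)) ** B = c *\<^sub>R (A ** B)"
  by (simp add: vec_eq_iff matrix_matrix_mult_def scaleR_sum_right)
lemma mm_scaleR_r: "(A::complex^'n^'n) ** (c *\<^sub>R B) = c *\<^sub>R (A ** B)"
  by (simp add: vec_eq_iff matrix_matrix_mult_def scaleR_sum_right)
lemma mv_scaleR_l: "(c *\<^sub>R (A::complex^'n^'n)) *v x = c *\<^sub>R (A *v x)"
  by (simp add: vec_eq_iff matrix_vector_mult_def scaleR_sum_right)

lemma cadj_mult: "cadj ((X::complex^'n^'n) ** Y) = cadj Y ** cadj X"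
  by (simp add: vec_eq_iff cadj_def matrix_matrix_mult_def mult.commute)
lemma cadj_cadj[simp]: "cadj (cadj X) = X"
  by (simp add: vec_eq_iff cadj_def)
lemma cadj_add: "cadj (X + Y) = cadj X + cadj Y"
  by (simp add: vec_eq_iff cadj_def)
lemma cadj_diff: "cadj (X - Y) = cadj X - cadj Y"
  by (simp add: vec_eq_iff cadj_def)
lemma cadj_scaleR: "cadj (c *\<^sub>R X) = c *\<^sub>R cadj X"
  by (simp add: vec_eq_iff cadj_def)
lemma cadj_rdiag: "cadj (rdiag d) = rdiag d"
  by (simp add: vec_eq_iff cadj_def rdiag_def)
lemma cadj_mat1: "cadj (mat 1 :: complex^'n^'n) = mat 1"
  by (simp add: vec_eq_iff cadj_def mat_def)

lemma herm_sandwich: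
  assumes "hermitian H" "hermitian K"
  shows "hermitian ((H::complex^'n^'n) ** K ** H)"
  using assms unfolding hermitian_def by (simp add: cadj_mult matrix_mul_assoc)

lemma mpow_spec:
  assumes "posdef (A::complex^'n^'n)"
  shows "\<exists>U d. unitary U \<and> A = U ** rdiag d ** cadj U
           \<and> mpow A s = U ** rdiag (\<lambda>i. d i powr s) ** cadj U"
proof -
  obtain U d where "unitary U" "A = U ** rdiag d ** cadj U"
    using spectral assms unfolding posdef_def by blast
  hence ex: "\<exists>X U d. unitary U \<and> A = U ** rdiag d ** cadj U
                         \<and> X = U ** rdiag (\<lambda>i. d i powr s) ** cadj U" by blast
  show ?thesis using someI_ex[OF ex] unfolding mpow_def by blast
qed

lemma herm_mpow:
  assumes "posdef (A::complex^'n^'n)" shows "hermitian (mpow A s)"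
proof -
  obtain U d where "mpow A s = U ** rdiag (\<lambda>i. d i powr s) ** cadj U"
    using mpow_spec[OF assms] by blast
  thus ?thesis unfolding hermitian_def by (simp add: cadj_mult cadj_rdiag matrix_mul_assoc)
qed

lemma qform_ip: "qform X z = ip z (X *v z)"
  by (simp add: qform_def ip_def matrix_vector_mult_def sum_distrib_left mult.assoc)

lemma qform_scaleR: "qform X (c *\<^sub>R z) = of_real (c^2) * qform X z"
  by (simp add: qform_ip mv_scaleR ip_scaleR_left ip_scaleR_right power2_eq_square)



definition proj :: "complex^'n \<Rightarrow> complex^'n^'n" where
  "proj u = (\<chi> i j. u $ i * cnj (u $ j))"

lemma proj_mv: "proj u *v z = ip u z *s u"
  by (simp add: vec_eq_iff proj_def matrix_vector_mult_def ip_def sum_distrib_left sum_distrib_right mult_ac)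

lemma proj_idem: assumes "ip u u = 1" shows "proj u ** proj u = proj u"
proof -
  have "(proj u ** proj u) $ i $ j = u $ i * cnj (u $ j) * ip u u" for i j
    by (simp add: proj_def matrix_matrix_mult_def ip_def sum_distrib_left sum_distrib_right mult_ac)
  thus ?thesis using assms by (simp add: vec_eq_iff proj_def)
qed

lemma cadj_proj: "cadj (proj u) = proj u"
  by (simp add: vec_eq_iff cadj_def proj_def mult.commute)

definition Cmat :: "real \<Rightarrow> complex^'n \<Rightarrow> complex^'n^'n" where
  "Cmat b u = b *\<^sub>R mat 1 + (1 - b) *\<^sub>R proj u"

lemma Cmat_posdef:
  fixes u :: "complex^'n"
  assumes b: "b > 0" and u: "ip u u = 1"
  shows "posdef (Cmat b u)"
  unfolding posdef_def
proof (intro conjI allI impI)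
  show "hermitian (Cmat b u)"
    by (simp add: hermitian_def Cmat_def cadj_add cadj_scaleR cadj_mat1 cadj_proj)
  fix z :: "complex^'n" assume z: "z \<noteq> 0"
  define a where "a = ip u z"
  have za: "ip z u = cnj a" by (simp add: a_def ip_cnj)
  have "qform (Cmat b u) z = of_real b * ip z z + of_real (1 - b) * (a * cnj a)"
    by (simp add: qform_ip Cmat_def matrix_vector_mult_add_rdistrib mv_scaleR_l proj_mv
        ip_add_right ip_scaleR_right ip_smult_right za a_def[symmetric] mult_ac)
  hence q: "Re (qform (Cmat b u) z) = b * (norm z)^2 + (1 - b) * (Re a ^ 2 + Im a ^ 2)"
    by (simp add: ip_self power2_eq_square)
  define w where "w = z - a *s u"
  have "ip w w = ip z z - a * cnj a"
    by (simp add: w_def ip_diff_left ip_diff_right ip_smult_left ip_smult_right za u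
        a_def[symmetric] algebra_simps)
  hence "Re (ip w w) = (norm z)^2 - (Re a ^ 2 + Im a ^ 2)"
    by (simp add: ip_self power2_eq_square)
  hence le: "Re a ^ 2 + Im a ^ 2 \<le> (norm z)^2"
    by (metis diff_ge_0_iff_ge ip_self Re_complex_of_real zero_le_power2)
  have nz: "(norm z)^2 > 0" using z by simp
  have q2: "Re (qform (Cmat b u) z) = b * ((norm z)^2 - (Re a ^ 2 + Im a ^ 2)) + (Re a ^ 2 + Im a ^ 2)"
    unfolding q by (simp add: algebra_simps)
  show "Re (qform (Cmat b u) z) > 0"
  proof (cases "Re a ^ 2 + Im a ^ 2 > 0")
    case True
    have "b * ((norm z)^2 - (Re a ^ 2 + Im a ^ 2)) \<ge> 0" using b le by simp
    thus ?thesis using True q2 by linarith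
  next
    case False
    hence "Re a ^ 2 + Im a ^ 2 = 0" by (metis add_nonneg_nonneg zero_le_power2 not_less order.antisym)
    thus ?thesis using q2 b nz by simp
  qed
qed



lemma rdiag_mult: "rdiag f ** rdiag g = rdiag (\<lambda>i. f i * g i)"
proof -
  have "(rdiag f ** rdiag g) $ i $ j = (\<Sum>k\<in>UNIV. if k = i then (if i = j then of_real (f i * g i) else 0) else 0)" for i j
    unfolding rdiag_def matrix_matrix_mult_def vec_lambda_beta by (intro sum.cong) auto
  thus ?thesis by (simp add: vec_eq_iff rdiag_def)
qed
lemma rdiag_add: "rdiag f + rdiag g = rdiag (\<lambda>i. f i + g i)"
  by (simp add: vec_eq_iff rdiag_def)
lemma rdiag_diff: "rdiag f - rdiag g = rdiag (\<lambda>i. f i - g i)"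
  by (simp add: vec_eq_iff rdiag_def)
lemma rdiag_scaleR: "c *\<^sub>R rdiag f = rdiag (\<lambda>i. c * f i)"
proof -
  have "(c *\<^sub>R rdiag f) $ i $ j = (rdiag (\<lambda>i. c * f i)) $ i $ j" for i j
    unfolding vector_scaleR_component rdiag_def vec_lambda_beta by (simp add: scaleR_conv_of_real)
  thus ?thesis by (simp add: vec_eq_iff)
qed
lemma mat1_rdiag: "(mat 1 :: complex^'n^'n) = rdiag (\<lambda>_. 1)"
  by (simp add: vec_eq_iff rdiag_def mat_def)
lemma rdiag_zero: "rdiag f = 0 \<Longrightarrow> f i = 0"
  by (drule arg_cong[where f="\<lambda>X. X $ i $ i"]) (simp add: rdiag_def)

lemma trace_scaleR: "trace (c *\<^sub>R (X::complex^'n^'n)) = c *\<^sub>R trace X"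
  by (simp add: trace_def scaleR_sum_right)

lemma trace_proj: "trace (M ** proj u) = qform M u"
proof -
  have "trace (M ** proj u) = (\<Sum>i\<in>UNIV. \<Sum>k\<in>UNIV. M $ i $ k * (u $ k * cnj (u $ i)))"
    by (simp add: trace_def matrix_matrix_mult_def proj_def)
  also have "\<dots> = qform M u"
    unfolding qform_def by (intro sum.cong refl) (simp add: mult_ac)
  finally show ?thesis .
qed

lemma unit_cancel:
  assumes "unitary U"
  shows "cadj U ** U = mat 1" "U ** cadj U = mat 1"
    "X ** cadj U ** U = X" "X ** U ** cadj U = X"
proof -
  show u1: "cadj U ** U = mat 1" using assms by (simp add: unitary_def)
  show u2: "U ** cadj U = mat 1" using u1 matrix_left_right_inverse by blast
  show "X ** cadj U ** U = X" by (metis matrix_mul_assoc u1 matrix_mul_rid)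
  show "X ** U ** cadj U = X" by (metis matrix_mul_assoc u2 matrix_mul_rid)
qed

lemma Cmat_pow:
  fixes u :: "complex^'n"
  assumes e0: "0 < \<epsilon>" and e1: "\<epsilon> < 1" and r: "r \<noteq> 0" and u: "ip u u = 1"
  shows "mpow (Cmat (\<epsilon> powr (1/r)) u) r = \<epsilon> *\<^sub>R mat 1 + (1 - \<epsilon>) *\<^sub>R proj u"
proof -
  define b where "b = \<epsilon> powr (1/r)"
  define C where "C = Cmat b u"
  define P where "P = proj u"
  have bpos: "b > 0" using e0 by (simp add: b_def)
  have br: "b powr r = \<epsilon>" using e0 r by (simp add: b_def powr_powr)
  have b1: "b \<noteq> 1" using br e1 by auto
  obtain U e where U: "unitary U" and CU: "C = U ** rdiag e ** cadj U"
    and pw: "mpow C r = U ** rdiag (\<lambda>i. e i powr r) ** cadj U"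
    using mpow_spec[OF Cmat_posdef[OF bpos u]] unfolding C_def by blast
  note uc = unit_cancel[OF U]
  have PP: "P ** P = P" using u by (simp add: P_def proj_idem)
  have c1: "C - b *\<^sub>R mat 1 = (1 - b) *\<^sub>R P" by (simp add: C_def Cmat_def P_def)
  have c2: "C - mat 1 = (1 - b) *\<^sub>R P - (1 - b) *\<^sub>R mat 1"
    by (simp add: C_def Cmat_def P_def algebra_simps)
  have Z: "(C - b *\<^sub>R mat 1) ** (C - mat 1) = 0"
    unfolding c1 c2 by (simp add: mm_scaleR_l mm_scaleR_r mm_diff_l PP)
  have D1: "rdiag (\<lambda>i. e i - b) = cadj U ** (C - b *\<^sub>R mat 1) ** U"
  proof -
    have "cadj U ** (C - b *\<^sub>R mat 1) ** U = cadj U ** C ** U - b *\<^sub>R mat 1"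
      by (simp add: mm_diff_l mm_diff_r mm_scaleR_l mm_scaleR_r uc)
    also have "cadj U ** C ** U = rdiag e"
      by (simp add: CU matrix_mul_assoc uc)
    finally show ?thesis by (simp add: mat1_rdiag rdiag_scaleR rdiag_diff)
  qed
  have D2: "rdiag (\<lambda>i. e i - 1) = cadj U ** (C - mat 1) ** U"
  proof -
    have "cadj U ** (C - mat 1) ** U = cadj U ** C ** U - mat 1"
      by (simp add: mm_diff_l mm_diff_r uc)
    also have "cadj U ** C ** U = rdiag e"
      by (simp add: CU matrix_mul_assoc uc)
    finally show ?thesis by (simp add: mat1_rdiag rdiag_diff)
  qed
  have "rdiag (\<lambda>i. (e i - b) * (e i - 1)) = rdiag (\<lambda>i. e i - b) ** rdiag (\<lambda>i. e i - 1)"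
    by (simp add: rdiag_mult)
  also have "\<dots> = cadj U ** ((C - b *\<^sub>R mat 1) ** (C - mat 1)) ** U"
    unfolding D1 D2 by (simp add: matrix_mul_assoc uc)
  also have "\<dots> = 0" unfolding Z by (simp add: vec_eq_iff matrix_matrix_mult_def)
  finally have ei: "e i = b \<or> e i = 1" for i
    using rdiag_zero by fastforce
  define bb where "bb = (1 - \<epsilon>) / (1 - b)"
  define aa where "aa = \<epsilon> - bb * b"
  have bbb: "bb * (1 - b) = 1 - \<epsilon>" using b1 by (simp add: bb_def)
  have epw: "e i powr r = aa + bb * e i" for i
    using ei[of i] br bbb by (auto simp: aa_def algebra_simps)
  have "rdiag (\<lambda>i. e i powr r) = aa *\<^sub>R mat 1 + bb *\<^sub>R rdiag e"
    by (simp add: epw mat1_rdiag rdiag_scaleR rdiag_add)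
  hence "mpow C r = U ** (aa *\<^sub>R mat 1 + bb *\<^sub>R rdiag e) ** cadj U" by (simp add: pw)
  also have "\<dots> = aa *\<^sub>R mat 1 + bb *\<^sub>R C"
    by (simp add: CU matrix_add_ldistrib mm_add_r mm_scaleR_l mm_scaleR_r uc)
  also have "\<dots> = (aa + bb * b) *\<^sub>R mat 1 + (bb * (1 - b)) *\<^sub>R P"
    by (simp add: C_def Cmat_def P_def algebra_simps)
  also have "\<dots> = \<epsilon> *\<^sub>R mat 1 + (1 - \<epsilon>) *\<^sub>R proj u"
    by (simp add: aa_def bbb P_def)
  finally show ?thesis by (simp add: C_def b_def)
qed



lemma psd_from_trace:
  fixes M :: "complex^'n^'n"
  assumes r: "r \<noteq> 0" and hM: "hermitian M"
    and tr: "\<And>C. posdef C \<Longrightarrow> 0 \<le> Re (trace (M ** mpow C r))"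
  shows "possemidef M"
  unfolding possemidef_def
proof (intro conjI allI hM)
  fix x :: "complex^'n"
  show "0 \<le> Re (qform M x)"
  proof (cases "x = 0")
    case True thus ?thesis by (simp add: qform_ip)
  next
    case False
    define n where "n = norm x"
    have n0: "n > 0" using False by (simp add: n_def)
    define u where "u = (1 / n) *\<^sub>R x"
    have u1: "ip u u = 1" using n0
      by (simp add: u_def ip_scaleR_left ip_scaleR_right ip_self n_def power2_eq_square)
    have xu: "x = n *\<^sub>R u" using n0 by (simp add: u_def)
    define T where "T = Re (trace M)"
    define Q where "Q = Re (qform M u)"
    have ineq: "0 \<le> e * T + (1 - e) * Q" if e0: "0 < e" and e1: "e < 1" for e
    proof -
      have "posdef (Cmat (e powr (1/r)) u)" using e0 u1 by (intro Cmat_posdef) auto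
      hence "0 \<le> Re (trace (M ** (e *\<^sub>R mat 1 + (1 - e) *\<^sub>R proj u)))"
        using tr Cmat_pow[OF e0 e1 r u1] by metis
      also have "M ** (e *\<^sub>R mat 1 + (1 - e) *\<^sub>R proj u) = e *\<^sub>R M + (1 - e) *\<^sub>R (M ** proj u)"
        by (simp add: matrix_add_ldistrib mm_scaleR_r)
      also have "Re (trace \<dots>) = e * T + (1 - e) * Q"
        by (simp add: trace_add trace_scaleR trace_proj T_def Q_def)
      finally show ?thesis .
    qed
    have Q0: "Q \<ge> 0"
    proof (rule ccontr)
      assume "\<not> Q \<ge> 0" hence Qn: "Q < 0" by simp
      define e where "e = - Q / (2 * (\<bar>T\<bar> - Q))"
      have den: "2 * (\<bar>T\<bar> - Q) > 0" using Qn by simp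
      have e0: "e > 0" unfolding e_def using Qn den by (intro divide_pos_pos) auto
      have "e * (2 * (\<bar>T\<bar> - Q)) = - Q" using den by (simp add: e_def)
      hence eq: "e * (\<bar>T\<bar> - Q) = - Q / 2" by (simp add: algebra_simps)
      have "e \<le> (\<bar>T\<bar> - Q) / (2 * (\<bar>T\<bar> - Q))"
        unfolding e_def using den by (intro divide_right_mono) auto
      also have "\<dots> = 1/2" using den by simp
      finally have "e \<le> 1/2" .
      hence e1: "e < 1" by simp
      have "e * T \<le> e * \<bar>T\<bar>" using e0 by (intro mult_left_mono) auto
      hence "e * T + (1 - e) * Q \<le> Q + e * (\<bar>T\<bar> - Q)" by (simp add: algebra_simps)
      also have "\<dots> = Q / 2" using eq by simp
      finally show False using ineq[OF e0 e1] Qn by linarith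
    qed
    have "qform M x = of_real (n^2) * qform M u" by (simp add: xu qform_scaleR)
    hence "Re (qform M x) = n^2 * Q" by (simp add: Q_def)
    thus ?thesis using Q0 by simp
  qed
qed



lemma posdef_comb:
  fixes A1 A2 :: "complex^'n^'n"
  assumes "posdef A1" "posdef A2" "0 \<le> t" "t \<le> 1"
  shows "posdef (t *\<^sub>R A1 + (1 - t) *\<^sub>R A2)"
  unfolding posdef_def
proof (intro conjI allI impI)
  show "hermitian (t *\<^sub>R A1 + (1 - t) *\<^sub>R A2)"
    using assms by (simp add: posdef_def hermitian_def cadj_add cadj_scaleR)
  fix x :: "complex^'n" assume x: "x \<noteq> 0"
  have q1: "Re (qform A1 x) > 0" and q2: "Re (qform A2 x) > 0" using assms x by (auto simp: posdef_def)
  have "qform (t *\<^sub>R A1 + (1 - t) *\<^sub>R A2) x = of_real t * qform A1 x + of_real (1 - t) * qform A2 x"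
    by (simp add: qform_ip matrix_vector_mult_add_rdistrib mv_scaleR_l ip_add_right ip_scaleR_right)
  hence e: "Re (qform (t *\<^sub>R A1 + (1 - t) *\<^sub>R A2) x) = t * Re (qform A1 x) + (1 - t) * Re (qform A2 x)"
    by simp
  show "Re (qform (t *\<^sub>R A1 + (1 - t) *\<^sub>R A2) x) > 0"
  proof (cases "t = 0")
    case True thus ?thesis using e q2 by simp
  next
    case False
    hence "t * Re (qform A1 x) > 0" using assms q1 by simp
    moreover have "(1 - t) * Re (qform A2 x) \<ge> 0" using assms q2 by simp
    ultimately show ?thesis using e by linarith
  qed
qed

lemma herm_F:
  assumes "posdef A" "posdef B"
  shows "hermitian (mpow A s ** mpow B p ** mpow A s)"
  by (intro herm_sandwich herm_mpow assms)

lemma herm_comb: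
  assumes "hermitian X" "hermitian Y" "hermitian Z"
  shows "hermitian (t *\<^sub>R X + (1 - t) *\<^sub>R Y - Z)" "hermitian (Z - (t *\<^sub>R X + (1 - t) *\<^sub>R Y))"
  using assms by (simp_all add: hermitian_def cadj_add cadj_diff cadj_scaleR)

lemma trace_lin:
  fixes F F1 F2 D :: "complex^'n^'n"
  shows "Re (trace ((t *\<^sub>R F1 + (1 - t) *\<^sub>R F2 - F) ** D)) =
     t * Re (trace (F1 ** D)) + (1 - t) * Re (trace (F2 ** D)) - Re (trace (F ** D))"
    "Re (trace ((F - (t *\<^sub>R F1 + (1 - t) *\<^sub>R F2)) ** D)) =
     Re (trace (F ** D)) - (t * Re (trace (F1 ** D)) + (1 - t) * Re (trace (F2 ** D)))"
  by (simp_all add: mm_diff_r mm_add_r mm_scaleR_l trace_sub trace_add trace_scaleR)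

lemma scaleR_same: "t *\<^sub>R (C::complex^'n^'n) + (1 - t) *\<^sub>R C = C"
proof -
  have "t *\<^sub>R C + (1 - t) *\<^sub>R C = (t + (1 - t)) *\<^sub>R C" by (rule scaleR_left_distrib[symmetric])
  thus ?thesis by simp
qed

theorem lemma3p1:
  fixes p q r :: real
  assumes "p \<noteq> 0" and "q \<noteq> 0" and "r \<noteq> 0"
  shows
   "((\<forall>(A1::complex^'n^'n) A2 B1 B2 C1 C2 (t::real).
        posdef A1 \<longrightarrow> posdef A2 \<longrightarrow> posdef B1 \<longrightarrow> posdef B2 \<longrightarrow> posdef C1 \<longrightarrow> posdef C2 \<longrightarrow>
        0 \<le> t \<longrightarrow> t \<le> 1 \<longrightarrow>
        (let A = t *\<^sub>R A1 + (1 - t) *\<^sub>R A2; B = t *\<^sub>R B1 + (1 - t) *\<^sub>R B2;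
             C = t *\<^sub>R C1 + (1 - t) *\<^sub>R C2 in
         Re (trace (mpow A (q/2) ** mpow B p ** mpow A (q/2) ** mpow C r))
         \<le> t * Re (trace (mpow A1 (q/2) ** mpow B1 p ** mpow A1 (q/2) ** mpow C1 r))
           + (1 - t) * Re (trace (mpow A2 (q/2) ** mpow B2 p ** mpow A2 (q/2) ** mpow C2 r))))
     \<longrightarrow>
     (\<forall>(A1::complex^'n^'n) A2 B1 B2 (t::real).
        posdef A1 \<longrightarrow> posdef A2 \<longrightarrow> posdef B1 \<longrightarrow> posdef B2 \<longrightarrow>
        0 \<le> t \<longrightarrow> t \<le> 1 \<longrightarrow>
        (let A = t *\<^sub>R A1 + (1 - t) *\<^sub>R A2; B = t *\<^sub>R B1 + (1 - t) *\<^sub>R B2 in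
         loewner_le (mpow A (q/2) ** mpow B p ** mpow A (q/2))
           (t *\<^sub>R (mpow A1 (q/2) ** mpow B1 p ** mpow A1 (q/2))
            + (1 - t) *\<^sub>R (mpow A2 (q/2) ** mpow B2 p ** mpow A2 (q/2))))))
   \<and>
   ((\<forall>(A1::complex^'n^'n) A2 B1 B2 C1 C2 (t::real).
        posdef A1 \<longrightarrow> posdef A2 \<longrightarrow> posdef B1 \<longrightarrow> posdef B2 \<longrightarrow> posdef C1 \<longrightarrow> posdef C2 \<longrightarrow>
        0 \<le> t \<longrightarrow> t \<le> 1 \<longrightarrow>
        (let A = t *\<^sub>R A1 + (1 - t) *\<^sub>R A2; B = t *\<^sub>R B1 + (1 - t) *\<^sub>R B2;
             C = t *\<^sub>R C1 + (1 - t) *\<^sub>R C2 in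
         t * Re (trace (mpow A1 (q/2) ** mpow B1 p ** mpow A1 (q/2) ** mpow C1 r))
           + (1 - t) * Re (trace (mpow A2 (q/2) ** mpow B2 p ** mpow A2 (q/2) ** mpow C2 r))
         \<le> Re (trace (mpow A (q/2) ** mpow B p ** mpow A (q/2) ** mpow C r))))
     \<longrightarrow>
     (\<forall>(A1::complex^'n^'n) A2 B1 B2 (t::real).
        posdef A1 \<longrightarrow> posdef A2 \<longrightarrow> posdef B1 \<longrightarrow> posdef B2 \<longrightarrow>
        0 \<le> t \<longrightarrow> t \<le> 1 \<longrightarrow>
        (let A = t *\<^sub>R A1 + (1 - t) *\<^sub>R A2; B = t *\<^sub>R B1 + (1 - t) *\<^sub>R B2 in
         loewner_le
           (t *\<^sub>R (mpow A1 (q/2) ** mpow B1 p ** mpow A1 (q/2))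
            + (1 - t) *\<^sub>R (mpow A2 (q/2) ** mpow B2 p ** mpow A2 (q/2)))
           (mpow A (q/2) ** mpow B p ** mpow A (q/2)))))"
proof (intro conjI impI allI)
  fix A1 A2 B1 B2 :: "complex^'n^'n" and t :: real
  let ?F = "\<lambda>A B. mpow A (q/2) ** mpow B p ** mpow A (q/2)"
  {
    assume H: "\<forall>(A1::complex^'n^'n) A2 B1 B2 C1 C2 (t::real).
        posdef A1 \<longrightarrow> posdef A2 \<longrightarrow> posdef B1 \<longrightarrow> posdef B2 \<longrightarrow> posdef C1 \<longrightarrow> posdef C2 \<longrightarrow>
        0 \<le> t \<longrightarrow> t \<le> 1 \<longrightarrow>
        (let A = t *\<^sub>R A1 + (1 - t) *\<^sub>R A2; B = t *\<^sub>R B1 + (1 - t) *\<^sub>R B2;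
             C = t *\<^sub>R C1 + (1 - t) *\<^sub>R C2 in
         Re (trace (mpow A (q/2) ** mpow B p ** mpow A (q/2) ** mpow C r))
         \<le> t * Re (trace (mpow A1 (q/2) ** mpow B1 p ** mpow A1 (q/2) ** mpow C1 r))
           + (1 - t) * Re (trace (mpow A2 (q/2) ** mpow B2 p ** mpow A2 (q/2) ** mpow C2 r)))"
    assume a: "posdef A1" "posdef A2" "posdef B1" "posdef B2" "0 \<le> t" "t \<le> 1"
    define A where "A = t *\<^sub>R A1 + (1 - t) *\<^sub>R A2"
    define B where "B = t *\<^sub>R B1 + (1 - t) *\<^sub>R B2"
    have pA: "posdef A" and pB: "posdef B" using a by (simp_all add: A_def B_def posdef_comb)
    have "possemidef (t *\<^sub>R ?F A1 B1 + (1 - t) *\<^sub>R ?F A2 B2 - ?F A B)"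
    proof (rule psd_from_trace[OF assms(3)])
      show "hermitian (t *\<^sub>R ?F A1 B1 + (1 - t) *\<^sub>R ?F A2 B2 - ?F A B)"
        using a pA pB by (intro herm_comb herm_F)
      fix C :: "complex^'n^'n" assume pC: "posdef C"
      have "Re (trace (?F A B ** mpow C r)) \<le> t * Re (trace (?F A1 B1 ** mpow C r))
           + (1 - t) * Re (trace (?F A2 B2 ** mpow C r))"
        using H[rule_format, OF a(1-4) pC pC a(5-6)] unfolding Let_def scaleR_same A_def B_def .
      thus "0 \<le> Re (trace ((t *\<^sub>R ?F A1 B1 + (1 - t) *\<^sub>R ?F A2 B2 - ?F A B) ** mpow C r))"
        unfolding trace_lin by linarith
    qed
    thus "let A = t *\<^sub>R A1 + (1 - t) *\<^sub>R A2; B = t *\<^sub>R B1 + (1 - t) *\<^sub>R B2 in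
         loewner_le (mpow A (q/2) ** mpow B p ** mpow A (q/2))
           (t *\<^sub>R (mpow A1 (q/2) ** mpow B1 p ** mpow A1 (q/2))
            + (1 - t) *\<^sub>R (mpow A2 (q/2) ** mpow B2 p ** mpow A2 (q/2)))"
      unfolding Let_def loewner_le_def A_def B_def .
  }
  {
    assume H: "\<forall>(A1::complex^'n^'n) A2 B1 B2 C1 C2 (t::real).
        posdef A1 \<longrightarrow> posdef A2 \<longrightarrow> posdef B1 \<longrightarrow> posdef B2 \<longrightarrow> posdef C1 \<longrightarrow> posdef C2 \<longrightarrow>
        0 \<le> t \<longrightarrow> t \<le> 1 \<longrightarrow>
        (let A = t *\<^sub>R A1 + (1 - t) *\<^sub>R A2; B = t *\<^sub>R B1 + (1 - t) *\<^sub>R B2;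
             C = t *\<^sub>R C1 + (1 - t) *\<^sub>R C2 in
         t * Re (trace (mpow A1 (q/2) ** mpow B1 p ** mpow A1 (q/2) ** mpow C1 r))
           + (1 - t) * Re (trace (mpow A2 (q/2) ** mpow B2 p ** mpow A2 (q/2) ** mpow C2 r))
         \<le> Re (trace (mpow A (q/2) ** mpow B p ** mpow A (q/2) ** mpow C r)))"
    assume a: "posdef A1" "posdef A2" "posdef B1" "posdef B2" "0 \<le> t" "t \<le> 1"
    define A where "A = t *\<^sub>R A1 + (1 - t) *\<^sub>R A2"
    define B where "B = t *\<^sub>R B1 + (1 - t) *\<^sub>R B2"
    have pA: "posdef A" and pB: "posdef B" using a by (simp_all add: A_def B_def posdef_comb)
    have "possemidef (?F A B - (t *\<^sub>R ?F A1 B1 + (1 - t) *\<^sub>R ?F A2 B2))"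
    proof (rule psd_from_trace[OF assms(3)])
      show "hermitian (?F A B - (t *\<^sub>R ?F A1 B1 + (1 - t) *\<^sub>R ?F A2 B2))"
        using a pA pB by (intro herm_comb herm_F)
      fix C :: "complex^'n^'n" assume pC: "posdef C"
      have "t * Re (trace (?F A1 B1 ** mpow C r)) + (1 - t) * Re (trace (?F A2 B2 ** mpow C r))
           \<le> Re (trace (?F A B ** mpow C r))"
        using H[rule_format, OF a(1-4) pC pC a(5-6)] unfolding Let_def scaleR_same A_def B_def .
      thus "0 \<le> Re (trace ((?F A B - (t *\<^sub>R ?F A1 B1 + (1 - t) *\<^sub>R ?F A2 B2)) ** mpow C r))"
        unfolding trace_lin by linarith
    qed
    thus "let A = t *\<^sub>R A1 + (1 - t) *\<^sub>R A2; B = t *\<^sub>R B1 + (1 - t) *\<^sub>R B2 in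
         loewner_le
           (t *\<^sub>R (mpow A1 (q/2) ** mpow B1 p ** mpow A1 (q/2))
            + (1 - t) *\<^sub>R (mpow A2 (q/2) ** mpow B2 p ** mpow A2 (q/2)))
           (mpow A (q/2) ** mpow B p ** mpow A (q/2))"
      unfolding Let_def loewner_le_def A_def B_def .
  }
qed


end
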